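(* Let $d\ge1$ and $\delta=(1\,2\,\cdots\,d)\in\mathrm{Sym}_d$. For any left-right matching, the associated top and bottom permutations satisfy $\pi^T\cdot\pi^B=\delta$; for any top-bottom matching, the associated left and right permutations satisfy $\pi^L\cdot\pi^R=\delta$.
   Context: Place $4d$ points on the boundary circle of a closed disk, labeled in counterclockwise cyclic order $T_1,L_1,B_1,R_1,T_2,L_2,B_2,R_2,\dots,T_d,L_d,B_d,R_d$. A left-right matching is a partition of $\{L_1,R_1,\dots,L_d,R_d\}$ into $d$ pairs that can be joined by pairwise disjoint arcs in the disk (a noncrossing perfect matching). Removing these arcs splits the disk into regions; the top partition $[\lambda]^T$ of $[d]$ puts $i,j$ in the same block iff $T_i,T_j$ lie in the same region, and the bottom partition $[\lambda]^B$ is defined likewise from the $B_i$. A top-bottom matching is defined in the same way with the $T$'s and $B$'s (cyclic order $T_1,B_1,\dots,T_d,B_d$), and it determines left and right partitions $[\lambda]^L,[\lambda]^R$ from the $L_i$'s and $R_i$'s. For a set partition of $[d]$, its permutation turns each block into a cycle listing its elements in increasing order; $\pi^T,\pi^B,\pi^L,\pi^R$ are the permutations of $[\lambda]^T,[\lambda]^B,[\lambda]^L,[\lambda]^R$. Products compose right to left (in $\pi^T\cdot\pi^B$, $\pi^B$ is applied first). *)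

theory Defs
  imports Main
begin

text \<open>Boundary points are encoded by positions 0..4d-1 in counterclockwise order:
  T_i = 4i-4, L_i = 4i-3, B_i = 4i-2, R_i = 4i-1 for i in 1..d.\<close>

definition Tpos :: "nat \<Rightarrow> nat" where "Tpos i = 4 * i - 4"
definition Lpos :: "nat \<Rightarrow> nat" where "Lpos i = 4 * i - 3"
definition Bpos :: "nat \<Rightarrow> nat" where "Bpos i = 4 * i - 2"
definition Rpos :: "nat \<Rightarrow> nat" where "Rpos i = 4 * i - 1"

definition perfect_matching :: "nat set set \<Rightarrow> nat set \<Rightarrow> bool" where
  "perfect_matching M S \<longleftrightarrow>
     (\<forall>e\<in>M. card e = 2 \<and> e \<subseteq> S) \<and> (\<forall>x\<in>S. \<exists>!e\<in>M. x \<in> e)"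

text \<open>Two chords cross iff their endpoints interleave (cutting the circle between
  the last and first position makes the cyclic order linear).\<close>
definition crosses :: "nat set \<Rightarrow> nat set \<Rightarrow> bool" where
  "crosses e f \<longleftrightarrow> (\<exists>a b c d. e = {a, b} \<and> f = {c, d} \<and> a < c \<and> c < b \<and> b < d)"

definition noncrossing_matching :: "nat set set \<Rightarrow> nat set \<Rightarrow> bool" where
  "noncrossing_matching M S \<longleftrightarrow> perfect_matching M S \<and>
     (\<forall>e\<in>M. \<forall>f\<in>M. e \<noteq> f \<longrightarrow> \<not> crosses e f)"

definition separates :: "nat set \<Rightarrow> nat \<Rightarrow> nat \<Rightarrow> bool" where
  "separates e x y \<longleftrightarrow> (\<exists>a b. e = {a, b} \<and> a < b \<and>
      ((a < x \<and> x < b) \<noteq> (a < y \<and> y < b)))"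

text \<open>Two boundary points (not endpoints of arcs) lie in the same region of the disk
  cut along the disjoint arcs iff no arc separates them.\<close>
definition same_region :: "nat set set \<Rightarrow> nat \<Rightarrow> nat \<Rightarrow> bool" where
  "same_region M x y \<longleftrightarrow> (\<forall>e\<in>M. \<not> separates e x y)"

definition region_partition :: "nat set set \<Rightarrow> (nat \<Rightarrow> nat) \<Rightarrow> nat \<Rightarrow> nat set set" where
  "region_partition M pos d =
     (\<lambda>i. {j \<in> {1..d}. same_region M (pos i) (pos j)}) ` {1..d}"

text \<open>Permutation of a set partition: each block becomes the cycle listing its
  elements in increasing order; identity off the ground set.\<close>
definition perm_of_partition :: "nat set set \<Rightarrow> nat \<Rightarrow> nat" where
  "perm_of_partition P i =
     (if \<exists>B\<in>P. i \<in> B then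
        (let B = (THE B. B \<in> P \<and> i \<in> B) in
           if \<exists>j\<in>B. i < j then Min {j \<in> B. i < j} else Min B)
      else i)"

definition long_cycle :: "nat \<Rightarrow> nat \<Rightarrow> nat" where
  "long_cycle d i = (if i \<in> {1..d} then (if i < d then i + 1 else 1) else i)"

end

theory Submission
  imports Defs
begin

lemma same_region_refl: "same_region M x x"
  by (auto simp: same_region_def separates_def)

lemma same_region_sym: "same_region M x y \<Longrightarrow> same_region M y x"
  unfolding same_region_def separates_def by metis

lemma same_region_trans: "same_region M x y \<Longrightarrow> same_region M y z \<Longrightarrow> same_region M x z"
  unfolding same_region_def separates_def by metis

lemma nc_sub: "noncrossing_matching M S \<Longrightarrow> e \<in> M \<Longrightarrow> x \<in> e \<Longrightarrow> x \<in> S"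
  unfolding noncrossing_matching_def perfect_matching_def by blast

lemma nc_card: "noncrossing_matching M S \<Longrightarrow> e \<in> M \<Longrightarrow> card e = 2"
  unfolding noncrossing_matching_def perfect_matching_def by blast

lemma nc_uniq: "noncrossing_matching M S \<Longrightarrow> e \<in> M \<Longrightarrow> f \<in> M \<Longrightarrow> x \<in> e \<Longrightarrow> x \<in> f \<Longrightarrow> e = f"
  unfolding noncrossing_matching_def perfect_matching_def by blast

lemma nc_ex: "noncrossing_matching M S \<Longrightarrow> x \<in> S \<Longrightarrow> \<exists>e\<in>M. x \<in> e"
  unfolding noncrossing_matching_def perfect_matching_def by blast

lemma nc_nocross:
  assumes "noncrossing_matching M S" "{a,b} \<in> M" "{c,d} \<in> M" "a < c" "c < b" "b < d"
  shows False
proof -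
  have na: "a \<notin> {c,d}" using assms(4-6) by auto
  have ne: "{a,b} \<noteq> {c,d}"
  proof
    assume eq: "{a,b} = {c,d}"
    have "a \<in> {a,b}" by simp
    then show False using eq na by simp
  qed
  have cr: "crosses {a,b} {c,d}" unfolding crosses_def
    apply (rule exI[of _ a], rule exI[of _ b], rule exI[of _ c], rule exI[of _ d])
    using assms(4-6) by simp
  have H: "\<forall>e\<in>M. \<forall>f\<in>M. e \<noteq> f \<longrightarrow> \<not> crosses e f"
    using assms(1) unfolding noncrossing_matching_def by (rule conjunct2)
  show False using H[rule_format, OF assms(2) assms(3) ne] cr by simp
qed

lemma arithA:
  fixes a b p q x y :: nat
  assumes "a<b" "a\<noteq>p" "b\<noteq>q" "a\<noteq>x" "b\<noteq>y" "(a<x\<and>x<b) \<noteq> (a<y\<and>y<b)" "\<not>(a<p\<and>p<b\<and>b<q)" "\<not>(p<a\<and>a<q\<and>q<b)"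
    "p < x" "x \<le> y" "y < q" "\<not>(p<a\<and>a<x)" "\<not>(y<b\<and>b<q)"
  shows False
proof (cases "a<x\<and>x<b")
  case True
  then have "a < y" using assms(10) by linarith
  then have "\<not> y < b" using True assms(6) by blast
  then have "b < y" using assms(5) by linarith
  have "\<not> p < a" using True assms(12) by blast
  then have "a < p" using assms(2) by linarith
  then show False using assms(7) True \<open>b<y\<close> assms(9,11) by linarith
next
  case False
  then have T: "a<y" "y<b" using assms(6) by blast+
  have "x < b" using T assms(10) by linarith
  then have "x < a" using assms(4) False by linarith
  have "\<not> b < q" using T assms(13) by blast
  then have "q < b" using assms(3) by linarith
  then show False using assms(8) \<open>x<a\<close> T assms(9,11) by linarith
qed

lemma arithB:
  fixes a b p q x y :: nat
  assumes "a<b" "a\<noteq>p" "a\<noteq>q" "b\<noteq>p" "b\<noteq>q" "a\<noteq>x" "b\<noteq>y" "(a<x\<and>x<b) \<noteq> (a<y\<and>y<b)" "\<not>(a<p\<and>p<b\<and>b<q)" "\<not>(p<a\<and>a<q\<and>q<b)"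
    "x < p" "q < y" "\<not>(x<a\<and>a<p)" "\<not>(x<b\<and>b<p)" "\<not>(q<a\<and>a<y)" "\<not>(q<b\<and>b<y)" "p<q"
  shows False
proof (cases "a<x\<and>x<b")
  case True
  then have "\<not>(a<y\<and>y<b)" using assms(8) by blast
  moreover have "a < y" using True assms(11,12,17) by linarith
  ultimately have "\<not> y < b" by blast
  then have "b < y" using assms(7) by linarith
  have "p < b"
  proof (rule ccontr)
    assume "\<not> p < b" then have "b < p" using assms(4) by linarith
    then show False using True assms(14) by blast
  qed
  have "b < q"
  proof (rule ccontr)
    assume "\<not> b < q" then have "q < b" using assms(5) by linarith
    then show False using \<open>b<y\<close> assms(16) by blast
  qed
  show False using assms(9,11) True \<open>p<b\<close> \<open>b<q\<close> by linarith
next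
  case False
  then have T: "a<y" "y<b" using assms(8) by blast+
  have "x < b" using T assms(11,12,17) by linarith
  then have "\<not> a < x" using False by blast
  then have "x < a" using assms(6) by linarith
  have "p < a"
  proof (rule ccontr)
    assume "\<not> p < a" then have "a < p" using assms(2) by linarith
    then show False using \<open>x<a\<close> assms(13) by blast
  qed
  have "a < q"
  proof (rule ccontr)
    assume "\<not> a < q" then have "q < a" using assms(3) by linarith
    then show False using T assms(15) by blast
  qed
  show False using assms(10,12) T \<open>p<a\<close> \<open>a<q\<close> by linarith
qed

lemma arithC:
  fixes a b p q x y :: nat
  assumes "a<b" "b\<noteq>p" "b\<noteq>q" "a\<noteq>y" "b\<noteq>y" "(a<x\<and>x<b) \<noteq> (a<y\<and>y<b)" "\<not>(a<p\<and>p<b\<and>b<q)"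
    "x \<le> y" "y < p" "\<not> a < x" "\<not>(y<b\<and>b<p)" "\<not> q < b"
  shows False
proof -
  have T: "a<y" "y<b" using assms(6,10) by blast+
  have "p < b" using T assms(2,11) by linarith
  have "b < q" using assms(3,12) by linarith
  show False using assms(7,9) T \<open>p<b\<close> \<open>b<q\<close> by linarith
qed

lemma arithC':
  fixes a b p q x y :: nat
  assumes "a<b" "a\<noteq>p" "a\<noteq>q" "a\<noteq>x" "b\<noteq>x" "(a<x\<and>x<b) \<noteq> (a<y\<and>y<b)" "\<not>(p<a\<and>a<q\<and>q<b)"
    "q < x" "x \<le> y" "\<not> a < p" "\<not>(q<a\<and>a<x)" "\<not> y < b"
  shows False
proof -
  have T: "a<x" "x<b" using assms(6,12) by blast+
  have "a < q" using T assms(3,11) by linarith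
  have "p < a" using assms(2,10) by linarith
  show False using assms(7,8) T \<open>p<a\<close> \<open>a<q\<close> by linarith
qed

lemma sep_edge:
  assumes nc: "noncrossing_matching M S" and f: "{p,q} \<in> M" and pq: "p < q"
    and e: "e \<in> M" and sep: "separates e x y"
  obtains "(p<x\<and>x<q) \<noteq> (p<y\<and>y<q)"
   | a b where "a<b" "a\<in>S" "b\<in>S" "a\<noteq>p" "a\<noteq>q" "b\<noteq>p" "b\<noteq>q"
      "(a<x\<and>x<b) \<noteq> (a<y\<and>y<b)" "\<not>(a<p\<and>p<b\<and>b<q)" "\<not>(p<a\<and>a<q\<and>q<b)"
proof -
  obtain a b where ab: "e = {a,b}" "a<b" "(a<x\<and>x<b) \<noteq> (a<y\<and>y<b)"
    using sep unfolding separates_def by blast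
  show ?thesis
  proof (cases "e = {p,q}")
    case True
    then have "a = p" "b = q" using ab pq by (auto simp: doubleton_eq_iff)
    then show ?thesis using that ab by blast
  next
    case False
    have S: "a \<in> S" "b \<in> S" using nc_sub[OF nc e] ab by auto
    have ne: "a\<noteq>p" "a\<noteq>q" "b\<noteq>p" "b\<noteq>q"
      using nc_uniq[OF nc e f] False ab by auto
    have c1: "\<not>(a<p\<and>p<b\<and>b<q)" using nc_nocross[OF nc _ f] e ab by blast
    have c2: "\<not>(p<a\<and>a<q\<and>q<b)" using nc_nocross[OF nc f _] e ab by blast
    show ?thesis using that(2)[OF ab(2) S ne ab(3) c1 c2] .
  qed
qed

lemma sep_diff:
  assumes "{p,q} \<in> M" "p < q" "(p<x\<and>x<q) \<noteq> (p<y\<and>y<q)"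
  shows "\<not> same_region M x y"
  using assms unfolding same_region_def separates_def by blast

lemma regA:
  assumes nc: "noncrossing_matching M S" and f: "{p,q} \<in> M" and pq: "p < q"
    and LIN: "p < x" "x \<le> y" "y < q" and h: "x \<notin> S" "y \<notin> S"
    "\<forall>s\<in>S. \<not>(p<s\<and>s<x)" "\<forall>s\<in>S. \<not>(y<s\<and>s<q)"
  shows "same_region M x y"
  unfolding same_region_def
proof (intro ballI notI)
  fix e assume e: "e \<in> M" and s: "separates e x y"
  show False
  proof (rule sep_edge[OF nc f pq e s])
    have "p<x" "x<q" "p<y" "y<q" using LIN by linarith+
    then show "(p<x\<and>x<q) \<noteq> (p<y\<and>y<q) \<Longrightarrow> False" by blast
  next
    fix a b assume H: "a<b" "a\<in>S" "b\<in>S" "a\<noteq>p" "a\<noteq>q" "b\<noteq>p" "b\<noteq>q"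
      "(a<x\<and>x<b) \<noteq> (a<y\<and>y<b)" "\<not>(a<p\<and>p<b\<and>b<q)" "\<not>(p<a\<and>a<q\<and>q<b)"
    have n: "a \<noteq> x" "b \<noteq> y" "\<not>(p<a\<and>a<x)" "\<not>(y<b\<and>b<q)"
      using H(2,3) h by blast+
    show False by (rule arithA[OF H(1) H(4) H(7) n(1,2) H(8-10) LIN n(3,4)])
  qed
qed

lemma regB:
  assumes nc: "noncrossing_matching M S" and f: "{p,q} \<in> M" and pq: "p < q"
    and LIN: "x < p" "q < y" and h: "x \<notin> S" "y \<notin> S"
    "\<forall>s\<in>S. \<not>(x<s\<and>s<p)" "\<forall>s\<in>S. \<not>(q<s\<and>s<y)"
  shows "same_region M x y"
  unfolding same_region_def
proof (intro ballI notI)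
  fix e assume e: "e \<in> M" and s: "separates e x y"
  show False
  proof (rule sep_edge[OF nc f pq e s])
    have "\<not> p<x" "\<not> y<q" using LIN pq by linarith+
    then show "(p<x\<and>x<q) \<noteq> (p<y\<and>y<q) \<Longrightarrow> False" by blast
  next
    fix a b assume H: "a<b" "a\<in>S" "b\<in>S" "a\<noteq>p" "a\<noteq>q" "b\<noteq>p" "b\<noteq>q"
      "(a<x\<and>x<b) \<noteq> (a<y\<and>y<b)" "\<not>(a<p\<and>p<b\<and>b<q)" "\<not>(p<a\<and>a<q\<and>q<b)"
    have n: "a \<noteq> x" "b \<noteq> y" "\<not>(x<a\<and>a<p)" "\<not>(x<b\<and>b<p)" "\<not>(q<a\<and>a<y)" "\<not>(q<b\<and>b<y)"
      using H(2,3) h by blast+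
    show False by (rule arithB[OF H(1,4-7) n(1,2) H(8-10) LIN n(3-6) pq])
  qed
qed

lemma regC:
  assumes nc: "noncrossing_matching M S" and f: "{p,q} \<in> M" and pq: "p < q"
    and LIN: "x \<le> y" "y < p" and h: "y \<notin> S"
    "\<forall>s\<in>S. \<not>(s<x)" "\<forall>s\<in>S. \<not>(y<s\<and>s<p)" "\<forall>s\<in>S. \<not>(q<s)"
  shows "same_region M x y"
  unfolding same_region_def
proof (intro ballI notI)
  fix e assume e: "e \<in> M" and s: "separates e x y"
  show False
  proof (rule sep_edge[OF nc f pq e s])
    have "\<not> p<x" "\<not> p<y" using LIN by linarith+
    then show "(p<x\<and>x<q) \<noteq> (p<y\<and>y<q) \<Longrightarrow> False" by blast
  next
    fix a b assume H: "a<b" "a\<in>S" "b\<in>S" "a\<noteq>p" "a\<noteq>q" "b\<noteq>p" "b\<noteq>q"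
      "(a<x\<and>x<b) \<noteq> (a<y\<and>y<b)" "\<not>(a<p\<and>p<b\<and>b<q)" "\<not>(p<a\<and>a<q\<and>q<b)"
    have n: "a \<noteq> y" "b \<noteq> y" "\<not> a<x" "\<not>(y<b\<and>b<p)" "\<not> q<b"
      using H(2,3) h by blast+
    show False by (rule arithC[OF H(1,6,7) n(1,2) H(8,9) LIN n(3-5)])
  qed
qed

lemma regC':
  assumes nc: "noncrossing_matching M S" and f: "{p,q} \<in> M" and pq: "p < q"
    and LIN: "q < x" "x \<le> y" and h: "x \<notin> S"
    "\<forall>s\<in>S. \<not>(s<p)" "\<forall>s\<in>S. \<not>(q<s\<and>s<x)" "\<forall>s\<in>S. \<not>(y<s)"
  shows "same_region M x y"
  unfolding same_region_def
proof (intro ballI notI)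
  fix e assume e: "e \<in> M" and s: "separates e x y"
  show False
  proof (rule sep_edge[OF nc f pq e s])
    have "\<not> x<q" "\<not> y<q" using LIN by linarith+
    then show "(p<x\<and>x<q) \<noteq> (p<y\<and>y<q) \<Longrightarrow> False" by blast
  next
    fix a b assume H: "a<b" "a\<in>S" "b\<in>S" "a\<noteq>p" "a\<noteq>q" "b\<noteq>p" "b\<noteq>q"
      "(a<x\<and>x<b) \<noteq> (a<y\<and>y<b)" "\<not>(a<p\<and>p<b\<and>b<q)" "\<not>(p<a\<and>a<q\<and>q<b)"
    have n: "a \<noteq> x" "b \<noteq> x" "\<not> a<p" "\<not>(q<a\<and>a<x)" "\<not> y<b"
      using H(2,3) h by blast+
    show False by (rule arithC'[OF H(1,4,5) n(1,2) H(8,10) LIN n(3-5)])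
  qed
qed


definition blk :: "nat set set \<Rightarrow> (nat \<Rightarrow> nat) \<Rightarrow> nat \<Rightarrow> nat \<Rightarrow> nat set" where
  "blk M pos d i = {j \<in> {1..d}. same_region M (pos i) (pos j)}"

lemma perm_in:
  assumes i: "i \<in> {1..d}"
  shows "perm_of_partition (region_partition M pos d) i =
    (if \<exists>j\<in>blk M pos d i. i<j then Min {j\<in>blk M pos d i. i<j} else Min (blk M pos d i))"
proof -
  let ?P = "region_partition M pos d"
  have rp: "?P = blk M pos d ` {1..d}" unfolding region_partition_def blk_def by simp
  have mem: "blk M pos d i \<in> ?P" using i rp by simp
  have ii: "i \<in> blk M pos d i" using i by (simp add: blk_def same_region_refl)
  have uniq: "B = blk M pos d i" if BB: "B \<in> ?P" "i \<in> B" for B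
  proof -
    obtain k where k: "k \<in> {1..d}" "B = blk M pos d k" using BB(1) rp by auto
    have sk: "same_region M (pos k) (pos i)" using BB(2) k by (simp add: blk_def)
    have "same_region M (pos k) (pos j) \<longleftrightarrow> same_region M (pos i) (pos j)" for j
      using sk same_region_sym[of M "pos k" "pos i"] same_region_trans[of M "pos i" "pos k" "pos j"]
        same_region_trans[of M "pos k" "pos i" "pos j"] by blast
    then show ?thesis unfolding k(2) blk_def by simp
  qed
  have the: "(THE B. B \<in> ?P \<and> i \<in> B) = blk M pos d i"
  proof (rule the_equality)
    show "blk M pos d i \<in> ?P \<and> i \<in> blk M pos d i" using mem ii by blast
    show "B = blk M pos d i" if "B \<in> ?P \<and> i \<in> B" for B using uniq that by blast
  qed
  have ex: "\<exists>B\<in>?P. i \<in> B" using mem ii by blast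
  show ?thesis unfolding perm_of_partition_def using ex the by (simp add: Let_def)
qed

lemma perm_out:
  assumes i: "i \<notin> {1..d}"
  shows "perm_of_partition (region_partition M pos d) i = i"
proof -
  have "\<not> (\<exists>B\<in>region_partition M pos d. i \<in> B)"
    using i unfolding region_partition_def by auto
  then show ?thesis unfolding perm_of_partition_def by simp
qed

lemma perm_succ1:
  assumes "i \<in> {1..d}" "j \<in> {1..d}" "i < j" "same_region M (pos i) (pos j)"
    "\<And>k. i < k \<Longrightarrow> k < j \<Longrightarrow> \<not> same_region M (pos i) (pos k)"
  shows "perm_of_partition (region_partition M pos d) i = j"
proof -
  have jb: "j \<in> {k\<in>blk M pos d i. i<k}" using assms(2-4) by (simp add: blk_def)
  have "Min {k\<in>blk M pos d i. i<k} = j"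
  proof (rule Min_eqI)
    show "finite {k\<in>blk M pos d i. i<k}" unfolding blk_def by simp
    show "j \<le> y" if "y \<in> {k\<in>blk M pos d i. i<k}" for y
      using that assms(5)[of y] by (force simp: blk_def)
  qed (rule jb)
  then show ?thesis using perm_in[OF assms(1)] jb by auto
qed

lemma perm_succ2:
  assumes "i \<in> {1..d}" "j \<in> {1..d}" "same_region M (pos i) (pos j)"
    "\<And>k. k \<in> {1..d} \<Longrightarrow> i < k \<Longrightarrow> \<not> same_region M (pos i) (pos k)"
    "\<And>k. k \<in> {1..d} \<Longrightarrow> k < j \<Longrightarrow> \<not> same_region M (pos i) (pos k)"
  shows "perm_of_partition (region_partition M pos d) i = j"
proof -
  have jb: "j \<in> blk M pos d i" using assms(2,3) by (simp add: blk_def)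
  have no: "\<not> (\<exists>k\<in>blk M pos d i. i<k)" using assms(4) by (auto simp: blk_def)
  have "Min (blk M pos d i) = j"
  proof (rule Min_eqI)
    show "finite (blk M pos d i)" unfolding blk_def by simp
    show "j \<le> y" if "y \<in> blk M pos d i" for y
      using that assms(5)[of y] by (force simp: blk_def)
  qed (rule jb)
  then show ?thesis using perm_in[OF assms(1)] no by auto
qed

lemma card_odd_between:
  "card {s::nat. odd s \<and> 2*a+1 < s \<and> s < 2*b+1} = b - a - 1"
proof -
  have "{s::nat. odd s \<and> 2*a+1 < s \<and> s < 2*b+1} = (\<lambda>t. 2*t+1) ` {a<..<b}"
  proof (intro set_eqI iffI)
    fix s assume "s \<in> {s::nat. odd s \<and> 2*a+1 < s \<and> s < 2*b+1}"
    then have "odd s" "2*a+1 < s" "s < 2*b+1" by auto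
    then obtain t where "s = 2*t+1" by (metis oddE)
    then show "s \<in> (\<lambda>t. 2*t+1) ` {a<..<b}" using \<open>2*a+1 < s\<close> \<open>s < 2*b+1\<close> by auto
  qed auto
  moreover have "inj_on (\<lambda>t::nat. 2*t+1) {a<..<b}" by (auto simp: inj_on_def)
  ultimately show ?thesis by (simp add: card_image)
qed

lemma card_even_between:
  "card {s::nat. even s \<and> 2*a < s \<and> s < 2*b} = b - a - 1"
proof -
  have "{s::nat. even s \<and> 2*a < s \<and> s < 2*b} = (\<lambda>t. 2*t) ` {a<..<b}"
  proof (intro set_eqI iffI)
    fix s assume "s \<in> {s::nat. even s \<and> 2*a < s \<and> s < 2*b}"
    then have "even s" "2*a < s" "s < 2*b" by auto
    then obtain t where "s = 2*t" by (metis evenE)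
    then show "s \<in> (\<lambda>t. 2*t) ` {a<..<b}" using \<open>2*a < s\<close> \<open>s < 2*b\<close> by auto
  qed auto
  moreover have "inj_on (\<lambda>t::nat. 2*t) {a<..<b}" by (auto simp: inj_on_def)
  ultimately show ?thesis by (simp add: card_image)
qed

lemma inside_even:
  assumes nc: "noncrossing_matching M S" and fin: "finite S" and f: "{p,q} \<in> M" and pq: "p < q"
  shows "even (card {s\<in>S. p<s \<and> s<q})"
proof -
  define I where "I = {s\<in>S. p<s \<and> s<q}"
  define C where "C = {e\<in>M. e \<subseteq> I}"
  have cover: "\<Union>C = I"
  proof
    show "\<Union>C \<subseteq> I" unfolding C_def by blast
  next
    show "I \<subseteq> \<Union>C"
    proof
      fix s assume s: "s \<in> I"
      then have sS: "s \<in> S" and sp: "p<s" "s<q" unfolding I_def by auto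
      obtain e where e: "e \<in> M" "s \<in> e" using nc_ex[OF nc sS] by blast
      have "card e = 2" using nc_card[OF nc e(1)] .
      then obtain u v where uv: "e = {u,v}" "u \<noteq> v" by (auto simp: card_2_iff)
      obtain t where t: "e = {s,t}" using uv e(2) by blast
      have tS: "t \<in> S" using nc_sub[OF nc e(1)] t by auto
      have tp: "t \<noteq> p" "t \<noteq> q"
      proof -
        have ne: "e \<noteq> {p,q}"
        proof
          assume "e = {p,q}"
          then show False using e(2) sp by auto
        qed
        show "t \<noteq> p"
        proof
          assume "t = p"
          then have "p \<in> e" using t by simp
          then show False using nc_uniq[OF nc e(1) f \<open>p \<in> e\<close>] ne by simp
        qed
        show "t \<noteq> q"
        proof
          assume "t = q"
          then have "q \<in> e" using t by simp
          then show False using nc_uniq[OF nc e(1) f \<open>q \<in> e\<close>] ne by simp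
        qed
      qed
      have "p < t \<and> t < q"
      proof (rule ccontr)
        assume "\<not> (p < t \<and> t < q)"
        then have "t < p \<or> q < t" using tp by auto
        then show False
        proof
          assume "t < p"
          moreover have "{t,s} \<in> M" using e(1) t by (metis insert_commute)
          ultimately show False using nc_nocross[OF nc _ f, of t s] sp by blast
        next
          assume "q < t"
          moreover have "{s,t} \<in> M" using e(1) t by simp
          ultimately show False using nc_nocross[OF nc f _, of s t] sp by blast
        qed
      qed
      then have "e \<subseteq> I" using t sS tS sp unfolding I_def by auto
      then show "s \<in> \<Union>C" using e unfolding C_def by blast
    qed
  qed
  have finI: "finite I" using fin unfolding I_def by simp
  have finC: "finite C" unfolding C_def
    by (rule finite_subset[of _ "Pow I"]) (use finI in auto)
  have disj: "pairwise disjnt C"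
  proof (rule pairwiseI)
    fix e f assume ef: "e \<in> C" "f \<in> C" "e \<noteq> f"
    show "disjnt e f" unfolding disjnt_def
    proof (rule ccontr)
      assume "e \<inter> f \<noteq> {}"
      then obtain x where x: "x \<in> e" "x \<in> f" by blast
      have "e \<in> M" "f \<in> M" using ef(1,2) unfolding C_def by auto
      then have "e = f" using nc_uniq[OF nc _ _ x] by blast
      then show False using ef(3) by contradiction
    qed
  qed
  have finE: "finite A" if "A \<in> C" for A
    using that finI unfolding C_def by (auto intro: finite_subset)
  have "card (\<Union>C) = sum card C" by (rule card_Union_disjoint[OF disj finE])
  then have "card I = sum card C" using cover by simp
  also have "\<dots> = sum (\<lambda>_. 2) C" using nc_card[OF nc] unfolding C_def by (intro sum.cong) auto
  also have "\<dots> = 2 * card C" by simp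
  finally show ?thesis unfolding I_def by simp
qed


definition S1 :: "nat \<Rightarrow> nat set" where "S1 d = Lpos ` {1..d} \<union> Rpos ` {1..d}"
definition S2 :: "nat \<Rightarrow> nat set" where "S2 d = Tpos ` {1..d} \<union> Bpos ` {1..d}"

lemma mod4_cases:
  fixes s :: nat
  obtains k where "s = 4*k" | k where "s = 4*k+1" | k where "s = 4*k+2" | k where "s = 4*k+3"
proof -
  have e: "s = 4*(s div 4) + s mod 4" by simp
  have "s mod 4 < 4" by simp
  then have "s mod 4 = 0 \<or> s mod 4 = 1 \<or> s mod 4 = 2 \<or> s mod 4 = 3" by auto
  then show ?thesis
  proof (elim disjE)
    assume "s mod 4 = 0" then show ?thesis using e that(1) by simp
  next
    assume "s mod 4 = 1" then show ?thesis using e that(2) by simp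
  next
    assume "s mod 4 = 2" then show ?thesis using e that(3) by simp
  next
    assume "s mod 4 = 3" then show ?thesis using e that(4) by simp
  qed
qed

lemma S1_char: "s \<in> S1 d \<longleftrightarrow> odd s \<and> s < 4*d"
proof
  assume "s \<in> S1 d"
  then obtain i where i: "i \<in> {1..d}" "s = 4*i-3 \<or> s = 4*i-1"
    unfolding S1_def Lpos_def Rpos_def by auto
  then obtain m where m: "i = Suc m" by (cases i) auto
  have "s = 4*m+1 \<or> s = 4*m+3" using i(2) m by auto
  then show "odd s \<and> s < 4*d" using i(1) m by auto
next
  assume h: "odd s \<and> s < 4*d"
  show "s \<in> S1 d"
  proof (cases s rule: mod4_cases)
    case (1 k) then show ?thesis using h by simp
  next
    case (2 k)
    then have "s = Lpos (k+1)" "k+1 \<in> {1..d}" using h by (auto simp: Lpos_def)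
    then show ?thesis unfolding S1_def by blast
  next
    case (3 k) then show ?thesis using h by simp
  next
    case (4 k)
    then have "s = Rpos (k+1)" "k+1 \<in> {1..d}" using h by (auto simp: Rpos_def)
    then show ?thesis unfolding S1_def by blast
  qed
qed

lemma S2_char: "s \<in> S2 d \<longleftrightarrow> even s \<and> s < 4*d"
proof
  assume "s \<in> S2 d"
  then obtain i where i: "i \<in> {1..d}" "s = 4*i-4 \<or> s = 4*i-2"
    unfolding S2_def Tpos_def Bpos_def by auto
  then obtain m where m: "i = Suc m" by (cases i) auto
  have "s = 4*m \<or> s = 4*m+2" using i(2) m by auto
  then show "even s \<and> s < 4*d" using i(1) m by auto
next
  assume h: "even s \<and> s < 4*d"
  show "s \<in> S2 d"
  proof (cases s rule: mod4_cases)
    case (1 k)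
    then have "s = Tpos (k+1)" "k+1 \<in> {1..d}" using h by (auto simp: Tpos_def)
    then show ?thesis unfolding S2_def by blast
  next
    case (2 k) then show ?thesis using h by simp
  next
    case (3 k)
    then have "s = Bpos (k+1)" "k+1 \<in> {1..d}" using h by (auto simp: Bpos_def)
    then show ?thesis unfolding S2_def by blast
  next
    case (4 k) then show ?thesis using h by simp
  qed
qed

lemma finS1: "finite (S1 d)" unfolding S1_def by simp
lemma finS2: "finite (S2 d)" unfolding S2_def by simp

lemma notS1a: "1 \<le> j \<Longrightarrow> 4*j-2 \<notin> S1 d" unfolding S1_char by (cases j) auto
lemma notS1b: "4*j-4 \<notin> S1 d" unfolding S1_char by (cases j) auto
lemma notS1c: "4*j \<notin> S1 d" unfolding S1_char by auto
lemma notS2a: "1 \<le> j \<Longrightarrow> 4*j-1 \<notin> S2 d" unfolding S2_char by (cases j) auto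
lemma notS2b: "1 \<le> j \<Longrightarrow> 4*j-3 \<notin> S2 d" unfolding S2_char by (cases j) auto

lemma parity1:
  assumes nc: "noncrossing_matching M (S1 d)" and f: "{p,q} \<in> M" and pq: "p < q"
    and m: "p = 4*k+3" "q = 4*l+3" and qd: "q < 4*d"
  shows False
proof -
  define a where "a = 2*k+1"
  define b where "b = 2*l+1"
  have a: "p = 2*a+1" and b: "q = 2*b+1" using m unfolding a_def b_def by auto
  have "{s\<in>S1 d. p<s \<and> s<q} = {s. odd s \<and> 2*a+1 < s \<and> s < 2*b+1}"
    using qd a b by (auto simp: S1_char)
  then have "card {s\<in>S1 d. p<s \<and> s<q} = b - a - 1" using card_odd_between[of a b] by simp
  moreover have "even (card {s\<in>S1 d. p<s \<and> s<q})" by (rule inside_even[OF nc finS1 f pq])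
  ultimately have E: "even (b - a - 1)" by simp
  have eq: "b - a - 1 = 2*(l-k-1) + 1" using m pq unfolding a_def b_def by linarith
  have "even (2*(l-k-1)+1)" using E eq by metis
  then show False by simp
qed

lemma parity2:
  assumes nc: "noncrossing_matching M (S2 d)" and f: "{p,q} \<in> M" and pq: "p < q"
    and m: "p = 4*k" "q = 4*l" and qd: "q < 4*d"
  shows False
proof -
  define a where "a = 2*k"
  define b where "b = 2*l"
  have a: "p = 2*a" and b: "q = 2*b" using m unfolding a_def b_def by auto
  have "{s\<in>S2 d. p<s \<and> s<q} = {s. even s \<and> 2*a < s \<and> s < 2*b}"
    using qd a b by (auto simp: S2_char)
  then have "card {s\<in>S2 d. p<s \<and> s<q} = b - a - 1" using card_even_between[of a b] by simp
  moreover have "even (card {s\<in>S2 d. p<s \<and> s<q})" by (rule inside_even[OF nc finS2 f pq])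
  ultimately have E: "even (b - a - 1)" by simp
  have eq: "b - a - 1 = 2*(l-k-1) + 1" using m pq unfolding a_def b_def by linarith
  have "even (2*(l-k-1)+1)" using E eq by metis
  then show False by simp
qed

lemma edge_at:
  assumes nc: "noncrossing_matching M S" and x: "x \<in> S"
  obtains z where "{x,z} \<in> M" "z \<in> S" "z \<noteq> x"
proof -
  obtain e where e: "e \<in> M" "x \<in> e" using nc_ex[OF nc x] by blast
  obtain u v where uv: "e = {u,v}" "u \<noteq> v" using nc_card[OF nc e(1)] by (auto simp: card_2_iff)
  obtain z where z: "e = {x,z}" "z \<noteq> x" using uv e(2) by blast
  have "z \<in> S" using nc_sub[OF nc e(1)] z by auto
  then show ?thesis using that e z by blast
qed

lemma partner1:
  assumes nc: "noncrossing_matching M (S1 d)" and i: "i \<in> {1..d}"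
  obtains j where "j \<in> {1..d}" "{4*i-1, 4*j-3} \<in> M"
proof -
  have x: "4*i-1 \<in> S1 d" using i unfolding S1_def Rpos_def by blast
  obtain z where z: "{4*i-1,z} \<in> M" "z \<in> S1 d" "z \<noteq> 4*i-1" using edge_at[OF nc x] by blast
  have zo: "odd z" "z < 4*d" using z(2) unfolding S1_char by auto
  have i3: "4*i-1 = 4*(i-1)+3" using i by auto
  show ?thesis
  proof (cases z rule: mod4_cases)
    case (1 k) then show ?thesis using zo by simp
  next
    case (3 k) then show ?thesis using zo by simp
  next
    case (2 k)
    then have "k+1 \<in> {1..d}" "z = 4*(k+1)-3" using zo by auto
    then show ?thesis using that z(1) by blast
  next
    case (4 k)
    show ?thesis
    proof (cases "z < 4*i-1")
      case True
      have "{z, 4*i-1} \<in> M" using z(1) by (simp add: insert_commute)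
      moreover have "4*i-1 < 4*d" using i by auto
      ultimately show ?thesis using parity1[OF nc _ True 4 i3] by blast
    next
      case False
      then have "4*i-1 < z" using z(3) by linarith
      from parity1[OF nc z(1) this i3 4 zo(2)] show ?thesis by auto
    qed
  qed
qed

lemma partner2:
  assumes nc: "noncrossing_matching M (S2 d)" and i: "i \<in> {1..d}"
  obtains j where "j \<in> {1..d}" "{4*i-4, 4*j-2} \<in> M"
proof -
  have x: "4*i-4 \<in> S2 d" using i unfolding S2_def Tpos_def by blast
  obtain z where z: "{4*i-4,z} \<in> M" "z \<in> S2 d" "z \<noteq> 4*i-4" using edge_at[OF nc x] by blast
  have zo: "even z" "z < 4*d" using z(2) unfolding S2_char by auto
  have i3: "4*i-4 = 4*(i-1)" using i by auto
  show ?thesis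
  proof (cases z rule: mod4_cases)
    case (2 k) then show ?thesis using zo by simp
  next
    case (4 k) then show ?thesis using zo by simp
  next
    case (3 k)
    then have "k+1 \<in> {1..d}" "z = 4*(k+1)-2" using zo by auto
    then show ?thesis using that z(1) by blast
  next
    case (1 k)
    show ?thesis
    proof (cases "z < 4*i-4")
      case True
      have "{z, 4*i-4} \<in> M" using z(1) by (simp add: insert_commute)
      moreover have "4*i-4 < 4*d" using i by auto
      ultimately show ?thesis using parity2[OF nc _ True 1 i3] by blast
    next
      case False
      then have "4*i-4 < z" using z(3) by linarith
      from parity2[OF nc z(1) this i3 1 zo(2)] show ?thesis by auto
    qed
  qed
qed


lemma pB:
  assumes nc: "noncrossing_matching M (S1 d)" and i: "i \<in> {1..d}" and j: "j \<in> {1..d}"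
    and f: "{4*i-1, 4*j-3} \<in> M"
  shows "perm_of_partition (region_partition M Bpos d) i = j"
proof (cases "i < j")
  case True
  have pq: "4*i-1 < 4*j-3" using True i by auto
  show ?thesis
  proof (rule perm_succ1[OF i j True])
    show "same_region M (Bpos i) (Bpos j)" unfolding Bpos_def
      by (rule regB[OF nc f pq]) (use i j True in \<open>auto simp: S1_char notS1a\<close>)
    fix k assume k: "i < k" "k < j"
    show "\<not> same_region M (Bpos i) (Bpos k)" unfolding Bpos_def
      by (rule sep_diff[OF f pq]) (use k i in auto)
  qed
next
  case False
  have f': "{4*j-3, 4*i-1} \<in> M" using f by (simp add: insert_commute)
  have pq: "4*j-3 < 4*i-1" using False j by auto
  show ?thesis
  proof (rule perm_succ2[OF i j])
    show "same_region M (Bpos i) (Bpos j)" unfolding Bpos_def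
      by (rule same_region_sym, rule regA[OF nc f' pq]) (use i j False in \<open>auto simp: S1_char notS1a\<close>)
    show "\<not> same_region M (Bpos i) (Bpos k)" if k: "k \<in> {1..d}" "i < k" for k
      unfolding Bpos_def by (rule sep_diff[OF f' pq]) (use k i j False in auto)
    show "\<not> same_region M (Bpos i) (Bpos k)" if k: "k \<in> {1..d}" "k < j" for k
      unfolding Bpos_def by (rule sep_diff[OF f' pq]) (use k i j False in auto)
  qed
qed

lemma pT:
  assumes nc: "noncrossing_matching M (S1 d)" and i: "i \<in> {1..d}" and j: "j \<in> {1..d}"
    and f: "{4*i-1, 4*j-3} \<in> M"
  shows "perm_of_partition (region_partition M Tpos d) j = (if i < d then i+1 else 1)"
proof (cases "j \<le> i")
  case True
  have f': "{4*j-3, 4*i-1} \<in> M" using f by (simp add: insert_commute)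
  have pq: "4*j-3 < 4*i-1" using True j by auto
  show ?thesis
  proof (cases "i < d")
    case lt: True
    have i1: "i+1 \<in> {1..d}" using lt by auto
    have "perm_of_partition (region_partition M Tpos d) j = i+1"
    proof (rule perm_succ1[OF j i1])
      show "j < i+1" using True by auto
      show "same_region M (Tpos j) (Tpos (i+1))" unfolding Tpos_def
        by (rule regB[OF nc f' pq]) (use i j True in \<open>auto simp: S1_char notS1b\<close>)
      fix k assume k: "j < k" "k < i+1"
      show "\<not> same_region M (Tpos j) (Tpos k)" unfolding Tpos_def
        by (rule sep_diff[OF f' pq]) (use k i j in auto)
    qed
    then show ?thesis using lt by simp
  next
    case ge: False
    then have id: "i = d" using i by auto
    have one: "1 \<in> {1..d}" using i by auto
    have "perm_of_partition (region_partition M Tpos d) j = 1"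
    proof (rule perm_succ2[OF j one])
      show "same_region M (Tpos j) (Tpos 1)" unfolding Tpos_def
        by (rule same_region_sym, rule regC[OF nc f' pq]) (use i j True id in \<open>auto simp: S1_char notS1b\<close>)
      show "\<not> same_region M (Tpos j) (Tpos k)" if k: "k \<in> {1..d}" "j < k" for k
        unfolding Tpos_def by (rule sep_diff[OF f' pq]) (use k i j id in auto)
      show "\<not> same_region M (Tpos j) (Tpos k)" if k: "k \<in> {1..d}" "k < 1" for k
        using k by auto
    qed
    then show ?thesis using ge by simp
  qed
next
  case False
  have pq: "4*i-1 < 4*j-3" using False i by auto
  have lt: "i < d" using False j by auto
  have i1: "i+1 \<in> {1..d}" using lt by auto
  have "perm_of_partition (region_partition M Tpos d) j = i+1"
  proof (rule perm_succ2[OF j i1])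
    show "same_region M (Tpos j) (Tpos (i+1))" unfolding Tpos_def
      by (rule same_region_sym, rule regA[OF nc f pq]) (use i j False in \<open>auto simp: S1_char notS1b\<close>)
    show "\<not> same_region M (Tpos j) (Tpos k)" if k: "k \<in> {1..d}" "j < k" for k
      unfolding Tpos_def by (rule sep_diff[OF f pq]) (use k i j False in auto)
    show "\<not> same_region M (Tpos j) (Tpos k)" if k: "k \<in> {1..d}" "k < i+1" for k
      unfolding Tpos_def by (rule sep_diff[OF f pq]) (use k i j False in auto)
  qed
  then show ?thesis using lt by simp
qed


lemma pR:
  assumes nc: "noncrossing_matching M (S2 d)" and i: "i \<in> {1..d}" and j: "j \<in> {1..d}"
    and f: "{4*(if i < d then i+1 else 1)-4, 4*j-2} \<in> M"
  shows "perm_of_partition (region_partition M Rpos d) i = j"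
proof (cases "i < d")
  case lt: True
  have f1: "{4*i, 4*j-2} \<in> M" using f lt by simp
  show ?thesis
  proof (cases "i < j")
    case True
    have pq: "4*i < 4*j-2" using True by auto
    show ?thesis
    proof (rule perm_succ1[OF i j True])
      show "same_region M (Rpos i) (Rpos j)" unfolding Rpos_def
        by (rule regB[OF nc f1 pq]) (use i j True in \<open>auto simp: S2_char notS2a\<close>)
      fix k assume k: "i < k" "k < j"
      show "\<not> same_region M (Rpos i) (Rpos k)" unfolding Rpos_def
        by (rule sep_diff[OF f1 pq]) (use k i in auto)
    qed
  next
    case False
    have f': "{4*j-2, 4*i} \<in> M" using f1 by (simp add: insert_commute)
    have pq: "4*j-2 < 4*i" using False j by auto
    show ?thesis
    proof (rule perm_succ2[OF i j])
      show "same_region M (Rpos i) (Rpos j)" unfolding Rpos_def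
        by (rule same_region_sym, rule regA[OF nc f' pq]) (use i j False in \<open>auto simp: S2_char notS2a\<close>)
      show "\<not> same_region M (Rpos i) (Rpos k)" if k: "k \<in> {1..d}" "i < k" for k
        unfolding Rpos_def by (rule sep_diff[OF f' pq]) (use k i j False in auto)
      show "\<not> same_region M (Rpos i) (Rpos k)" if k: "k \<in> {1..d}" "k < j" for k
        unfolding Rpos_def by (rule sep_diff[OF f' pq]) (use k i j False in auto)
    qed
  qed
next
  case ge: False
  then have id: "i = d" using i by auto
  have f1: "{0, 4*j-2} \<in> M" using f ge by simp
  have pq: "0 < 4*j-2" using j by auto
  show ?thesis
  proof (rule perm_succ2[OF i j])
    show "same_region M (Rpos i) (Rpos j)" unfolding Rpos_def
      by (rule same_region_sym, rule regC'[OF nc f1 pq]) (use i j id in \<open>auto simp: S2_char notS2a\<close>)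
    show "\<not> same_region M (Rpos i) (Rpos k)" if k: "k \<in> {1..d}" "i < k" for k
      using k id by auto
    show "\<not> same_region M (Rpos i) (Rpos k)" if k: "k \<in> {1..d}" "k < j" for k
      unfolding Rpos_def by (rule sep_diff[OF f1 pq]) (use k i j id in auto)
  qed
qed

lemma pL:
  assumes nc: "noncrossing_matching M (S2 d)" and i: "i \<in> {1..d}" and j: "j \<in> {1..d}"
    and f: "{4*i-4, 4*j-2} \<in> M"
  shows "perm_of_partition (region_partition M Lpos d) j = i"
proof (cases "i \<le> j")
  case True
  have pq: "4*i-4 < 4*j-2" using True i by auto
  show ?thesis
  proof (rule perm_succ2[OF j i])
    show "same_region M (Lpos j) (Lpos i)" unfolding Lpos_def
      by (rule same_region_sym, rule regA[OF nc f pq]) (use i j True in \<open>auto simp: S2_char notS2b\<close>)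
    show "\<not> same_region M (Lpos j) (Lpos k)" if k: "k \<in> {1..d}" "j < k" for k
      unfolding Lpos_def by (rule sep_diff[OF f pq]) (use k i j True in auto)
    show "\<not> same_region M (Lpos j) (Lpos k)" if k: "k \<in> {1..d}" "k < i" for k
      unfolding Lpos_def by (rule sep_diff[OF f pq]) (use k i j True in auto)
  qed
next
  case False
  have f': "{4*j-2, 4*i-4} \<in> M" using f by (simp add: insert_commute)
  have pq: "4*j-2 < 4*i-4" using False j by auto
  have ji: "j < i" using False by auto
  show ?thesis
  proof (rule perm_succ1[OF j i ji])
    show "same_region M (Lpos j) (Lpos i)" unfolding Lpos_def
      by (rule regB[OF nc f' pq]) (use i j False in \<open>auto simp: S2_char notS2b\<close>)
    fix k assume k: "j < k" "k < i"
    show "\<not> same_region M (Lpos j) (Lpos k)" unfolding Lpos_def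
      by (rule sep_diff[OF f' pq]) (use k i j in auto)
  qed
qed

theorem proposition4p22:
  fixes d :: nat
  assumes "d \<ge> 1"
  shows "(\<forall>M. noncrossing_matching M (Lpos ` {1..d} \<union> Rpos ` {1..d}) \<longrightarrow>
            perm_of_partition (region_partition M Tpos d) \<circ>
            perm_of_partition (region_partition M Bpos d) = long_cycle d)
       \<and> (\<forall>M. noncrossing_matching M (Tpos ` {1..d} \<union> Bpos ` {1..d}) \<longrightarrow>
            perm_of_partition (region_partition M Lpos d) \<circ>
            perm_of_partition (region_partition M Rpos d) = long_cycle d)"
proof (intro conjI allI impI)
  fix M assume "noncrossing_matching M (Lpos ` {1..d} \<union> Rpos ` {1..d})"
  then have nc: "noncrossing_matching M (S1 d)" unfolding S1_def .
  show "perm_of_partition (region_partition M Tpos d) \<circ>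
            perm_of_partition (region_partition M Bpos d) = long_cycle d"
  proof
    fix i
    show "(perm_of_partition (region_partition M Tpos d) \<circ>
            perm_of_partition (region_partition M Bpos d)) i = long_cycle d i"
    proof (cases "i \<in> {1..d}")
      case False
      have lc: "long_cycle d i = i" unfolding long_cycle_def using False by (rule if_not_P)
      show ?thesis using perm_out[OF False] lc by simp
    next
      case True
      obtain j where j: "j \<in> {1..d}" "{4*i-1, 4*j-3} \<in> M" using partner1[OF nc True] by blast
      show ?thesis using pB[OF nc True j] pT[OF nc True j] True by (simp add: long_cycle_def)
    qed
  qed
next
  fix M assume "noncrossing_matching M (Tpos ` {1..d} \<union> Bpos ` {1..d})"
  then have nc: "noncrossing_matching M (S2 d)" unfolding S2_def .
  show "perm_of_partition (region_partition M Lpos d) \<circ>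
            perm_of_partition (region_partition M Rpos d) = long_cycle d"
  proof
    fix i
    show "(perm_of_partition (region_partition M Lpos d) \<circ>
            perm_of_partition (region_partition M Rpos d)) i = long_cycle d i"
    proof (cases "i \<in> {1..d}")
      case False
      have lc: "long_cycle d i = i" unfolding long_cycle_def using False by (rule if_not_P)
      show ?thesis using perm_out[OF False] lc by simp
    next
      case True
      define i' where "i' = (if i < d then i+1 else 1)"
      have i': "i' \<in> {1..d}" using True unfolding i'_def by auto
      obtain j where j: "j \<in> {1..d}" "{4*i'-4, 4*j-2} \<in> M" using partner2[OF nc i'] by blast
      have "perm_of_partition (region_partition M Rpos d) i = j"
        using pR[OF nc True j(1)] j(2) unfolding i'_def by blast
      moreover have "perm_of_partition (region_partition M Lpos d) j = i'"
        by (rule pL[OF nc i' j(1) j(2)])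
      ultimately show ?thesis using True unfolding i'_def by (simp add: long_cycle_def)
    qed
  qed
qed

end
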